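(* Let $w=e_{a_1}\cdots e_{a_N}$ with $a_1,\dots,a_N\in\{0,1\}$, $N\ge0$, and put $\overleftarrow{w}=e_{a_N}\cdots e_{a_1}$. Then in $\mathfrak H[[s,t]]$, \begin{align*} &\sum_{v=0}^{N}(-1)^v\,(1+e_0t)^{-1}e_1e_{a_1}\cdots e_{a_v}\ ш\ (1-e_0s)^{-1}e_1e_{a_N}\cdots e_{a_{v+1}}\\ &=(1+e_0t)^{-1}\ ш\ \bigl((1-e_0s)^{-1}e_1\overleftarrow{w}e_1(1-e_0t)^{-1}\bigr)+(-1)^N(1-e_0s)^{-1}\ ш\ \bigl((1+e_0t)^{-1}e_1we_1(1+e_0s)^{-1}\bigr). \end{align*}
   Context: $\mathfrak H=\mathbb Q\langle e_0,e_1\rangle$ (noncommutative polynomials); $s,t$ commuting indeterminates; $(1\pm e_0t)^{-1}=\sum_{m\ge0}(\mp t)^me_0^m$ etc. in $\mathfrak H[[s,t]]$. The shuffle product $ш$ on $\mathfrak H$ is the $\mathbb Q$-bilinear product with $1ш w=wш1=w$ and $we_iш w'e_j=(we_iш w')e_j+(wш w'e_j)e_i$ ($w,w'\in\mathfrak H$, $i,j\in\{0,1\}$), extended bilinearly and coefficientwise to $\mathfrak H[[s,t]]$. For $v=N$ the word $e_{a_N}\cdots e_{a_{v+1}}$ is empty, and for $v=0$ the word $e_{a_1}\cdots e_{a_v}$ is empty. *)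

theory Defs
  imports Complex_Main
begin

text \<open>Words in the letters e_0, e_1 are lists of naturals (letter i stands for e_i).
  Elements of Q<e0,e1> are represented by their coefficient functions word => rat.
  Elements of H[[s,t]] are represented by coefficient functions
  F :: nat => nat => (word => rat), where F m n is the coefficient of s^m t^n.\<close>

type_synonym word = "nat list"
type_synonym hpol = "word \<Rightarrow> rat"
type_synonym hser = "nat \<Rightarrow> nat \<Rightarrow> hpol"

definition wd :: "word \<Rightarrow> hpol" where
  "wd u = (\<lambda>x. if x = u then 1 else 0)"

text \<open>Shuffle of words, by the recursion on last letters
  (u e_i) sh (v e_j) = ((u e_i) sh v) e_j + (u sh (v e_j)) e_i,
  written here on reversed words (head = last letter).\<close>
fun shr :: "word \<Rightarrow> word \<Rightarrow> hpol" where
  "shr [] v = wd v"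
| "shr (i # u) [] = wd (i # u)"
| "shr (i # u) (j # v) =
     (\<lambda>w. case w of [] \<Rightarrow> 0
        | c # w' \<Rightarrow> (if c = j then shr (i # u) v w' else 0)
                  + (if c = i then shr u (j # v) w' else 0))"

definition shw :: "word \<Rightarrow> word \<Rightarrow> hpol" where
  "shw u v = (\<lambda>w. shr (rev u) (rev v) (rev w))"

text \<open>Bilinear extension of shuffle (only subwords of w can contribute to the
  coefficient of w, so the sum is finite).\<close>
definition shH :: "hpol \<Rightarrow> hpol \<Rightarrow> hpol" where
  "shH f g = (\<lambda>w. \<Sum>u\<in>set (subseqs w). \<Sum>v\<in>set (subseqs w). f u * g v * shw u v w)"

definition mulH :: "hpol \<Rightarrow> hpol \<Rightarrow> hpol" where
  "mulH f g = (\<lambda>w. \<Sum>i\<le>length w. f (take i w) * g (drop i w))"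

definition mulS :: "hser \<Rightarrow> hser \<Rightarrow> hser" where
  "mulS F G = (\<lambda>m n w. \<Sum>i\<le>m. \<Sum>j\<le>n. mulH (F i j) (G (m - i) (n - j)) w)"

definition shS :: "hser \<Rightarrow> hser \<Rightarrow> hser" where
  "shS F G = (\<lambda>m n w. \<Sum>i\<le>m. \<Sum>j\<le>n. shH (F i j) (G (m - i) (n - j)) w)"

definition cstS :: "hpol \<Rightarrow> hser" where
  "cstS f = (\<lambda>m n. if m = 0 \<and> n = 0 then f else (\<lambda>_. 0))"

text \<open>(1 - c e_0 s)^{-1} = sum_m c^m s^m e_0^m  and  (1 - c e_0 t)^{-1} = sum_n c^n t^n e_0^n.\<close>
definition geoS :: "rat \<Rightarrow> hser" where
  "geoS c = (\<lambda>m n w. if n = 0 \<and> w = replicate m 0 then c ^ m else 0)"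

definition geoT :: "rat \<Rightarrow> hser" where
  "geoT c = (\<lambda>m n w. if m = 0 \<and> w = replicate n 0 then c ^ n else 0)"

end

theory Submission
  imports Defs "HOL-Library.Sublist"
begin


lemma shr_nil2: "shr x [] = wd x"
  by (cases x) auto

lemma shr_Nil3: "shr x y [] = (if x = [] \<and> y = [] then 1 else 0)"
  by (cases x; cases y) (auto simp: wd_def)

lemma shr_Cons3: "shr x y (c # z) =
   (case x of [] \<Rightarrow> 0 | i # x' \<Rightarrow> if i = c then shr x' y z else 0) +
   (case y of [] \<Rightarrow> 0 | j # y' \<Rightarrow> if j = c then shr x y' z else 0)"
  by (cases x; cases y) (auto simp: wd_def shr_nil2)

lemma shw_Nil: "shw u v [] = (if u = [] \<and> v = [] then 1 else 0)"
  by (simp add: shw_def shr_Nil3)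

lemma shw_snoc: "shw u v (w @ [c]) =
   (if u \<noteq> [] \<and> last u = c then shw (butlast u) v w else 0) +
   (if v \<noteq> [] \<and> last v = c then shw u (butlast v) w else 0)"
proof -
  have "shw u v (w @ [c]) = shr (rev u) (rev v) (c # rev w)" by (simp add: shw_def)
  also have "\<dots> = (if u \<noteq> [] \<and> last u = c then shw (butlast u) v w else 0) +
   (if v \<noteq> [] \<and> last v = c then shw u (butlast v) w else 0)" unfolding shr_Cons3
    by (cases u rule: rev_cases; cases v rule: rev_cases) (auto simp: shw_def)
  finally show ?thesis .
qed

lemma shr_comm: "shr x y z = shr y x z"
proof (induction z arbitrary: x y)
  case Nil then show ?case by (auto simp: shr_Nil3)
next
  case (Cons c z)
  show ?case unfolding shr_Cons3
    by (cases x; cases y) (auto simp: Cons.IH shr_nil2)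
qed

lemma shw_comm: "shw u v w = shw v u w"
  by (simp add: shw_def shr_comm)

lemma sub1: "subseq x w \<Longrightarrow> subseq (x@[c]) (w@[c])" by auto
lemma sub2: "subseq v w \<Longrightarrow> subseq v (w@[c])" by auto

lemma shw_supp: "shw u v w \<noteq> 0 \<Longrightarrow> subseq u w \<and> subseq v w"
proof (induction w arbitrary: u v rule: rev_induct)
  case Nil then show ?case by (auto simp: shw_Nil split: if_splits)
next
  case (snoc c w)
  show ?case
  proof (cases "u \<noteq> [] \<and> last u = c \<and> shw (butlast u) v w \<noteq> 0")
    case True
    then have "subseq (butlast u) w" "subseq v w" using snoc.IH by auto
    moreover have "u = butlast u @ [c]" using True by (metis append_butlast_last_id)
    ultimately show ?thesis
      by (metis sub1 sub2)
  next
    case False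
    then have "v \<noteq> [] \<and> last v = c \<and> shw u (butlast v) w \<noteq> 0"
      using snoc.prems unfolding shw_snoc by (auto split: if_splits)
    then have "subseq u w" "subseq (butlast v) w" "v = butlast v @ [c]" using snoc.IH by auto
    then show ?thesis
      by (metis sub1 sub2)
  qed
qed



lemma sum2_ext:
  assumes "finite X" "finite Y" "finite X'" "finite Y'"
    and "\<And>u v. F u v \<noteq> 0 \<Longrightarrow> u \<in> X \<inter> X' \<and> v \<in> Y \<inter> Y'"
  shows "(\<Sum>u\<in>X. \<Sum>v\<in>Y. F u v) = (\<Sum>u\<in>X'. \<Sum>v\<in>Y'. (F u v :: rat))"
proof -
  have "(\<Sum>u\<in>X. \<Sum>v\<in>Y. F u v) = (\<Sum>u\<in>X\<inter>X'. \<Sum>v\<in>Y\<inter>Y'. F u v)"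
  proof -
    have "(\<Sum>u\<in>X. \<Sum>v\<in>Y. F u v) = (\<Sum>u\<in>X. \<Sum>v\<in>Y\<inter>Y'. F u v)"
      by (rule sum.cong[OF refl], rule sum.mono_neutral_right) (use assms in auto)
    also have "\<dots> = (\<Sum>u\<in>X\<inter>X'. \<Sum>v\<in>Y\<inter>Y'. F u v)"
      by (rule sum.mono_neutral_right) (use assms in \<open>auto intro!: sum.neutral\<close>)
    finally show ?thesis .
  qed
  also have "\<dots> = (\<Sum>u\<in>X'. \<Sum>v\<in>Y'. F u v)"
  proof -
    have "(\<Sum>u\<in>X'. \<Sum>v\<in>Y'. F u v) = (\<Sum>u\<in>X'. \<Sum>v\<in>Y\<inter>Y'. F u v)"
      by (rule sum.cong[OF refl], rule sum.mono_neutral_right) (use assms in auto)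
    also have "\<dots> = (\<Sum>u\<in>X\<inter>X'. \<Sum>v\<in>Y\<inter>Y'. F u v)"
      by (rule sum.mono_neutral_right) (use assms in \<open>auto intro!: sum.neutral\<close>)
    finally show ?thesis by simp
  qed
  finally show ?thesis .
qed

lemma shH_any:
  assumes "finite U" "finite V" "\<And>u v. shw u v w \<noteq> 0 \<Longrightarrow> u \<in> U \<and> v \<in> V"
  shows "shH f g w = (\<Sum>u\<in>U. \<Sum>v\<in>V. f u * g v * shw u v w)"
  unfolding shH_def
  by (rule sum2_ext) (use assms shw_supp in auto)

lemma snoc_set: "{u \<in> set (subseqs (w @ [c])). u \<noteq> [] \<and> last u = c} = (\<lambda>x. x @ [c]) ` set (subseqs w)"
proof (intro equalityI subsetI)
  fix u assume "u \<in> {u \<in> set (subseqs (w @ [c])). u \<noteq> [] \<and> last u = c}"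
  then have u: "subseq u (w@[c])" "u \<noteq> []" "last u = c" by auto
  then have "u = butlast u @ [c]" by (metis append_butlast_last_id)
  with u have "subseq (butlast u @ [c]) (w @ [c])" by simp
  then have "subseq (butlast u) w" by simp
  then show "u \<in> (\<lambda>x. x @ [c]) ` set (subseqs w)"
    using \<open>u = butlast u @ [c]\<close> by auto
qed auto

lemma reidx:
  "(\<Sum>u\<in>set (subseqs (w @ [c])). (if u \<noteq> [] \<and> last u = c then H u else 0)) =
   (\<Sum>x\<in>set (subseqs w). H (x @ [c]))"
proof -
  have "(\<Sum>u\<in>set (subseqs (w @ [c])). (if u \<noteq> [] \<and> last u = c then H u else 0)) =
     (\<Sum>u\<in>{u \<in> set (subseqs (w @ [c])). u \<noteq> [] \<and> last u = c}. H u)"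
    by (rule sum.inter_filter[symmetric]) simp
  also have "\<dots> = (\<Sum>x\<in>set (subseqs w). H (x @ [c]))"
    unfolding snoc_set by (subst sum.reindex) (auto simp: inj_on_def)
  finally show ?thesis .
qed

lemma shH_snoc:
  "shH f g (w @ [c]) = shH (\<lambda>u. f (u @ [c])) g w + shH f (\<lambda>v. g (v @ [c])) w"
proof -
  let ?S = "set (subseqs w)" and ?T = "set (subseqs (w @ [c]))"
  have "shH f g (w @ [c]) =
     (\<Sum>u\<in>?T. \<Sum>v\<in>?T. f u * g v * (if u \<noteq> [] \<and> last u = c then shw (butlast u) v w else 0)) +
     (\<Sum>u\<in>?T. \<Sum>v\<in>?T. f u * g v * (if v \<noteq> [] \<and> last v = c then shw u (butlast v) w else 0))"
    unfolding shH_def shw_snoc by (simp add: distrib_left sum.distrib)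
  also have "(\<Sum>u\<in>?T. \<Sum>v\<in>?T. f u * g v * (if u \<noteq> [] \<and> last u = c then shw (butlast u) v w else 0))
     = (\<Sum>u\<in>?T. (if u \<noteq> [] \<and> last u = c then (\<Sum>v\<in>?T. f u * g v * shw (butlast u) v w) else 0))"
    by (rule sum.cong) auto
  also have "\<dots> = (\<Sum>x\<in>?S. \<Sum>v\<in>?T. f (x@[c]) * g v * shw x v w)"
    by (subst reidx) simp
  also have "\<dots> = shH (\<lambda>u. f (u @ [c])) g w"
    by (rule shH_any[symmetric]) (use shw_supp in auto)
  also have "(\<Sum>u\<in>?T. \<Sum>v\<in>?T. f u * g v * (if v \<noteq> [] \<and> last v = c then shw u (butlast v) w else 0))
     = (\<Sum>u\<in>?T. \<Sum>v\<in>?T. (if v \<noteq> [] \<and> last v = c then f u * g v * shw u (butlast v) w else 0))"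
    by (intro sum.cong) auto
  also have "\<dots> = (\<Sum>u\<in>?T. \<Sum>y\<in>?S. f u * g (y@[c]) * shw u y w)"
  proof (rule sum.cong[OF refl])
    fix u show "(\<Sum>v\<in>?T. (if v \<noteq> [] \<and> last v = c then f u * g v * shw u (butlast v) w else 0))
       = (\<Sum>y\<in>?S. f u * g (y@[c]) * shw u y w)"
      using reidx[where H="\<lambda>v. f u * g v * shw u (butlast v) w" and w=w and c=c] by simp
  qed
  also have "\<dots> = shH f (\<lambda>v. g (v @ [c])) w"
    by (rule shH_any[symmetric]) (use shw_supp in auto)
  finally show ?thesis .
qed

lemma shH_Nil: "shH f g [] = f [] * g []"
  by (simp add: shH_def shw_Nil)

lemma shH_comm: "shH f g w = shH g f w"
  unfolding shH_def by (subst sum.swap) (simp add: shw_comm mult_ac)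



definition dS :: "nat \<Rightarrow> hser \<Rightarrow> hser" where
  "dS c F = (\<lambda>m n w. F m n (w @ [c]))"
definition tsh :: "rat \<Rightarrow> hser \<Rightarrow> hser" where
  "tsh k F = (\<lambda>m n w. if n = 0 then 0 else k * F m (n - 1) w)"
definition ssh :: "rat \<Rightarrow> hser \<Rightarrow> hser" where
  "ssh k F = (\<lambda>m n w. if m = 0 then 0 else k * F (m - 1) n w)"
definition zS :: hser where "zS = (\<lambda>m n w. 0)"

lemma shS_snoc: "shS F G m n (w @ [c]) = shS (dS c F) G m n w + shS F (dS c G) m n w"
  unfolding shS_def dS_def by (simp add: shH_snoc sum.distrib)

lemma shS_Nil: "shS F G m n [] = (\<Sum>i\<le>m. \<Sum>j\<le>n. F i j [] * G (m - i) (n - j) [])"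
  unfolding shS_def by (simp add: shH_Nil)

lemma shH_zero_l: "shH (\<lambda>_. 0) g w = 0" by (simp add: shH_def)
lemma shH_zero_r: "shH f (\<lambda>_. 0) w = 0" by (simp add: shH_def)
lemma shH_scal_l: "shH (\<lambda>u. k * f u) g w = k * shH f g w"
  by (simp add: shH_def sum_distrib_left mult_ac)
lemma shH_scal_r: "shH f (\<lambda>u. k * g u) w = k * shH f g w"
  by (simp add: shH_def sum_distrib_left mult_ac)

lemma shS_zS_l: "shS zS G = zS" by (simp add: shS_def zS_def shH_zero_l)
lemma shS_zS_r: "shS F zS = zS" by (simp add: shS_def zS_def shH_zero_r)

lemma sum_atMost_rev: fixes g :: "nat \<Rightarrow> 'a::comm_monoid_add"
  shows "(\<Sum>i\<le>m. g i) = (\<Sum>i\<le>m. g (m - i))"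
  using sum.atLeastAtMost_rev[of g 0 m] by (simp add: atLeast0AtMost)

lemma shS_comm: "shS F G = shS G F"
proof (intro ext)
  fix m n w
  have "shS F G m n w = (\<Sum>i\<le>m. \<Sum>j\<le>n. shH (F (m - i) (n - j)) (G (m - (m - i)) (n - (n - j))) w)"
    unfolding shS_def by (subst sum_atMost_rev, rule sum.cong[OF refl], subst sum_atMost_rev, simp)
  also have "\<dots> = shS G F m n w"
    unfolding shS_def by (intro sum.cong refl) (simp add: shH_comm)
  finally show "shS F G m n w = shS G F m n w" .
qed

lemma shS_tsh_l: "shS (tsh k F) G = tsh k (shS F G)"
proof (intro ext)
  fix m n w
  show "shS (tsh k F) G m n w = tsh k (shS F G) m n w"
  proof (cases n)
    case 0 then show ?thesis by (simp add: shS_def tsh_def shH_zero_l)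
  next
    case (Suc n')
    have "shS (tsh k F) G m n w = (\<Sum>i\<le>m. \<Sum>j\<le>n'. shH (\<lambda>x. k * F i j x) (G (m - i) (n' - j)) w)"
      unfolding shS_def tsh_def Suc
      by (rule sum.cong[OF refl]) (simp add: sum.atMost_Suc_shift shH_zero_l del: sum.atMost_Suc)
    also have "\<dots> = tsh k (shS F G) m n w"
      unfolding shS_def tsh_def Suc by (simp add: shH_scal_l sum_distrib_left)
    finally show ?thesis .
  qed
qed

lemma shS_tsh_r: "shS F (tsh k G) = tsh k (shS F G)"
  by (metis shS_comm shS_tsh_l)

lemma shS_ssh_l: "shS (ssh k F) G = ssh k (shS F G)"
proof (intro ext)
  fix m n w
  show "shS (ssh k F) G m n w = ssh k (shS F G) m n w"
  proof (cases m)
    case 0 then show ?thesis by (simp add: shS_def ssh_def shH_zero_l)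
  next
    case (Suc m')
    have "shS (ssh k F) G m n w = (\<Sum>i\<le>m'. \<Sum>j\<le>n. shH (\<lambda>x. k * F i j x) (G (m' - i) (n - j)) w)"
      unfolding shS_def ssh_def Suc
      by (simp add: sum.atMost_Suc_shift shH_zero_l del: sum.atMost_Suc)
    also have "\<dots> = ssh k (shS F G) m n w"
      unfolding shS_def ssh_def Suc by (simp add: shH_scal_l sum_distrib_left)
    finally show ?thesis .
  qed
qed

lemma shS_ssh_r: "shS F (ssh k G) = ssh k (shS F G)"
  by (metis shS_comm shS_ssh_l)



lemma app_iff: "((\<exists>p. w = p @ u) \<and> take (length w - length u) w = q) \<longleftrightarrow> w = q @ u"
  by auto

lemma drop_iff: "i \<le> length w \<Longrightarrow> (drop i w = u) \<longleftrightarrow> ((\<exists>p. w = p @ u) \<and> i = length w - length u)"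
proof
  assume "i \<le> length w" "drop i w = u"
  then show "(\<exists>p. w = p @ u) \<and> i = length w - length u"
    by (metis append_take_drop_id diff_diff_cancel length_drop)
next
  assume "(\<exists>p. w = p @ u) \<and> i = length w - length u"
  then show "drop i w = u" by auto
qed

lemma sum_ifP: "(\<Sum>j\<in>A. if P then f j else 0) = (if P then sum f A else (0::'a::comm_monoid_add))"
  by simp

lemma mulH_pt: "mulH f (\<lambda>x. if x = u then k else 0) w =
   (if (\<exists>p. w = p @ u) then f (take (length w - length u) w) * k else 0)" (is "_ = ?R")
proof -
  have "mulH f (\<lambda>x. if x = u then k else 0) w =
     (\<Sum>i\<le>length w. if i = length w - length u then (if (\<exists>p. w = p @ u) then f (take i w) * k else 0) else 0)"
    unfolding mulH_def by (intro sum.cong refl) (auto simp: drop_iff)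
  also have "\<dots> = ?R" by (simp add: sum.delta)
  finally show ?thesis .
qed

lemma mulH_zero_r: "mulH f (\<lambda>_. 0) w = 0" by (simp add: mulH_def)
lemma mulH_zero_l: "mulH (\<lambda>_. 0) g w = 0" by (simp add: mulH_def)

lemma mulS_cst: "mulS F (cstS g) m n w = mulH (F m n) g w"
proof -
  have "mulS F (cstS g) m n w = (\<Sum>i\<le>m. \<Sum>j\<le>n. if i = m then (if j = n then mulH (F m n) g w else 0) else 0)"
    unfolding mulS_def cstS_def by (intro sum.cong refl) (auto simp: mulH_zero_r)
  also have "\<dots> = mulH (F m n) g w" by (simp only: sum_ifP sum.delta) simp
  finally show ?thesis .
qed

lemma mulS_geoT: "mulS F (geoT d) m n w =
   (\<Sum>j\<le>n. mulH (F m j) (\<lambda>x. if x = replicate (n - j) 0 then d ^ (n - j) else 0) w)" (is "_ = ?R")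
proof -
  have "mulS F (geoT d) m n w = (\<Sum>i\<le>m. if i = m then
      (\<Sum>j\<le>n. mulH (F m j) (\<lambda>x. if x = replicate (n - j) 0 then d ^ (n - j) else 0) w) else 0)"
    unfolding mulS_def geoT_def
    by (rule sum.cong[OF refl]) (auto simp: mulH_zero_r)
  also have "\<dots> = ?R" by (simp add: sum.delta sum.delta')
  finally show ?thesis .
qed

lemma mulS_geoS: "mulS F (geoS d) m n w =
   (\<Sum>i\<le>m. mulH (F i n) (\<lambda>x. if x = replicate (m - i) 0 then d ^ (m - i) else 0) w)" (is "_ = ?R")
proof -
  have "mulS F (geoS d) m n w = (\<Sum>i\<le>m. \<Sum>j\<le>n. if j = n then
      mulH (F i n) (\<lambda>x. if x = replicate (m - i) 0 then d ^ (m - i) else 0) w else 0)"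
    unfolding mulS_def geoS_def
    by (intro sum.cong refl) (auto simp: mulH_zero_r)
  also have "\<dots> = ?R" by (simp add: sum.delta sum.delta')
  finally show ?thesis .
qed

lemma PT: "mulS (geoT c) (cstS (wd u)) m n w = (if m = 0 \<and> w = replicate n 0 @ u then c ^ n else 0)"
proof -
  have "mulS (geoT c) (cstS (wd u)) m n w = mulH (geoT c m n) (\<lambda>x. if x = u then 1 else 0) w"
    by (simp add: mulS_cst wd_def)
  also have "\<dots> = (if m = 0 \<and> w = replicate n 0 @ u then c ^ n else 0)"
    unfolding mulH_pt geoT_def using app_iff[of w u "replicate n 0"] by auto
  finally show ?thesis .
qed

lemma QS: "mulS (geoS c) (cstS (wd u)) m n w = (if n = 0 \<and> w = replicate m 0 @ u then c ^ m else 0)"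
proof -
  have "mulS (geoS c) (cstS (wd u)) m n w = mulH (geoS c m n) (\<lambda>x. if x = u then 1 else 0) w"
    by (simp add: mulS_cst wd_def)
  also have "\<dots> = (if n = 0 \<and> w = replicate m 0 @ u then c ^ m else 0)"
    unfolding mulH_pt geoS_def using app_iff[of w u "replicate m 0"] by auto
  finally show ?thesis .
qed

lemma Z1form: "mulS (mulS (geoS c) (cstS (wd u))) (geoT d) m n w =
   (if w = replicate m 0 @ u @ replicate n 0 then c ^ m * d ^ n else 0)"
proof -
  have "mulS (mulS (geoS c) (cstS (wd u))) (geoT d) m n w =
     (\<Sum>j\<le>n. if j = 0 then mulH (\<lambda>x. if x = replicate m 0 @ u then c ^ m else 0)
         (\<lambda>x. if x = replicate n 0 then d ^ n else 0) w else 0)"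
    unfolding mulS_geoT QS by (intro sum.cong refl) (auto simp: mulH_zero_l cong: if_cong)
  also have "\<dots> = mulH (\<lambda>x. if x = replicate m 0 @ u then c ^ m else 0)
         (\<lambda>x. if x = replicate n 0 then d ^ n else 0) w"
    by (simp only: sum.delta finite_atMost atMost_iff zero_le if_True diff_zero)
  also have "\<dots> = (if w = replicate m 0 @ u @ replicate n 0 then c ^ m * d ^ n else 0)"
    unfolding mulH_pt using app_iff[of w "replicate n 0" "replicate m 0 @ u"] by auto
  finally show ?thesis .
qed

lemma Z2form: "mulS (mulS (geoT c) (cstS (wd u))) (geoS d) m n w =
   (if w = replicate n 0 @ u @ replicate m 0 then c ^ n * d ^ m else 0)"
proof -
  have "mulS (mulS (geoT c) (cstS (wd u))) (geoS d) m n w =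
     (\<Sum>i\<le>m. if i = 0 then mulH (\<lambda>x. if x = replicate n 0 @ u then c ^ n else 0)
         (\<lambda>x. if x = replicate m 0 then d ^ m else 0) w else 0)"
    unfolding mulS_geoS PT by (intro sum.cong refl) (auto simp: mulH_zero_l cong: if_cong)
  also have "\<dots> = mulH (\<lambda>x. if x = replicate n 0 @ u then c ^ n else 0)
         (\<lambda>x. if x = replicate m 0 then d ^ m else 0) w"
    by (simp only: sum.delta finite_atMost atMost_iff zero_le if_True diff_zero)
  also have "\<dots> = (if w = replicate n 0 @ u @ replicate m 0 then c ^ n * d ^ m else 0)"
    unfolding mulH_pt using app_iff[of w "replicate m 0" "replicate n 0 @ u"] by auto
  finally show ?thesis .
qed



definition Pv :: "nat list \<Rightarrow> nat \<Rightarrow> hser" where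
  "Pv a v = mulS (geoT (-1)) (cstS (wd (1 # take v a)))"
definition Qv :: "nat list \<Rightarrow> nat \<Rightarrow> hser" where
  "Qv a v = mulS (geoS 1) (cstS (wd (1 # rev (drop v a))))"
definition Z1 :: "nat list \<Rightarrow> hser" where
  "Z1 a = mulS (mulS (geoS 1) (cstS (wd (1 # rev a @ [1])))) (geoT 1)"
definition Z2 :: "nat list \<Rightarrow> hser" where
  "Z2 a = mulS (mulS (geoT (-1)) (cstS (wd (1 # a @ [1])))) (geoS (-1))"

lemma rep_snoc: "replicate (Suc n) x = replicate n x @ [x]"
  by (simp add: replicate_append_same)

lemma Pv_val: "Pv a v m n w = (if m = 0 \<and> w = replicate n 0 @ 1 # take v a then (-1) ^ n else 0)"
  by (simp add: Pv_def PT)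
lemma Qv_val: "Qv a v m n w = (if n = 0 \<and> w = replicate m 0 @ 1 # rev (drop v a) then 1 else 0)"
  by (simp add: Qv_def QS)
lemma Z1_val: "Z1 a m n w = (if w = replicate m 0 @ (1 # rev a @ [1]) @ replicate n 0 then 1 else 0)"
  by (simp add: Z1_def Z1form)
lemma Z2_val: "Z2 a m n w = (if w = replicate n 0 @ (1 # a @ [1]) @ replicate m 0 then (-1) ^ n * (-1) ^ m else 0)"
  by (simp add: Z2_def Z2form)

lemma dP0: "dS c (Pv a 0) = (if c = 1 then geoT (-1) else zS)"
  by (auto simp: dS_def Pv_val geoT_def zS_def fun_eq_iff)

lemma dPv: assumes "0 < v" "v \<le> length a"
  shows "dS c (Pv a v) = (if c = a ! (v - 1) then Pv a (v - 1) else zS)"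
proof -
  have t: "take v a = take (v - 1) a @ [a ! (v - 1)]"
    using assms by (metis Suc_diff_1 Suc_le_lessD take_Suc_conv_app_nth)
  show ?thesis
    by (auto simp: dS_def Pv_val zS_def fun_eq_iff t)
qed

lemma dQN: "dS c (Qv a (length a)) = (if c = 1 then geoS 1 else zS)"
  by (auto simp: dS_def Qv_val geoS_def zS_def fun_eq_iff)

lemma dQv: assumes "v < length a"
  shows "dS c (Qv a v) = (if c = a ! v then Qv a (Suc v) else zS)"
proof -
  have t: "rev (drop v a) = rev (drop (Suc v) a) @ [a ! v]"
    using assms by (metis Cons_nth_drop_Suc rev.simps(2))
  show ?thesis
    by (auto simp: dS_def Qv_val zS_def fun_eq_iff t)
qed

lemma snocq: "(w @ [c] = X @ replicate (Suc k) x) = (c = x \<and> w = X @ replicate k x)"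
  by (simp only: rep_snoc append_assoc[symmetric] append1_eq_conv) blast

lemma snocq0: "(w @ [c] = replicate (Suc k) x) = (c = x \<and> w = replicate k x)"
  using snocq[of w c "[]" k x] by simp

lemma snocq1: "(w @ [c] = X @ [y]) = (c = y \<and> w = X)"
  by auto

lemma Z1_val': "Z1 a m n w = (if w = (replicate m 0 @ 1 # rev a @ [1]) @ replicate n 0 then 1 else 0)"
  by (simp add: Z1_val)
lemma Z2_val': "Z2 a m n w = (if w = (replicate n 0 @ 1 # a @ [1]) @ replicate m 0 then (-1) ^ n * (-1) ^ m else 0)"
  by (simp add: Z2_val)

lemma dA: "dS c (geoT (-1)) = (if c = 0 then tsh (-1) (geoT (-1)) else zS)"
proof -
  have "geoT (-1) m n (w @ [c]) = (if c = 0 then tsh (-1) (geoT (-1)) m n w else 0)" for m n w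
  proof (cases n)
    case 0 then show ?thesis by (simp add: geoT_def tsh_def)
  next
    case (Suc k) then show ?thesis
      unfolding geoT_def tsh_def Suc by (simp only: snocq0) auto
  qed
  then show ?thesis by (auto simp: dS_def zS_def fun_eq_iff)
qed

lemma dB: "dS c (geoS 1) = (if c = 0 then ssh 1 (geoS 1) else zS)"
proof -
  have "geoS 1 m n (w @ [c]) = (if c = 0 then ssh 1 (geoS 1) m n w else 0)" for m n w
  proof (cases m)
    case 0 then show ?thesis by (simp add: geoS_def ssh_def)
  next
    case (Suc k) then show ?thesis
      unfolding geoS_def ssh_def Suc by (simp only: snocq0) auto
  qed
  then show ?thesis by (auto simp: dS_def zS_def fun_eq_iff)
qed

lemma dZ1: "dS c (Z1 a) = (if c = 0 then tsh 1 (Z1 a) else if c = 1 then Qv a 0 else zS)"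
proof -
  have "Z1 a m n (w @ [c]) = (if c = 0 then tsh 1 (Z1 a) m n w else if c = 1 then Qv a 0 m n w else 0)" for m n w
  proof (cases n)
    case 0
    have "Z1 a m n (w @ [c]) = (if w @ [c] = (replicate m 0 @ 1 # rev a) @ [1] then 1 else 0)"
      by (simp add: Z1_val 0)
    also have "\<dots> = (if c = 1 \<and> w = replicate m 0 @ 1 # rev a then 1 else 0)"
      by (simp only: snocq1)
    finally show ?thesis by (auto simp: 0 tsh_def Qv_val)
  next
    case (Suc k)
    have "Z1 a m n (w @ [c]) = (if c = 0 \<and> w = (replicate m 0 @ 1 # rev a @ [1]) @ replicate k 0 then 1 else 0)"
      by (simp only: Z1_val' Suc snocq)
    then show ?thesis by (auto simp: Suc tsh_def Qv_val Z1_val)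
  qed
  then show ?thesis by (auto simp: dS_def zS_def fun_eq_iff)
qed

lemma dZ2: "dS c (Z2 a) = (if c = 0 then ssh (-1) (Z2 a) else if c = 1 then Pv a (length a) else zS)"
proof -
  have "Z2 a m n (w @ [c]) = (if c = 0 then ssh (-1) (Z2 a) m n w else if c = 1 then Pv a (length a) m n w else 0)" for m n w
  proof (cases m)
    case 0
    have "Z2 a m n (w @ [c]) = (if w @ [c] = (replicate n 0 @ 1 # a) @ [1] then (-1) ^ n else 0)"
      by (simp add: Z2_val 0)
    also have "\<dots> = (if c = 1 \<and> w = replicate n 0 @ 1 # a then (-1) ^ n else 0)"
      by (simp only: snocq1)
    finally show ?thesis by (auto simp: 0 ssh_def Pv_val)
  next
    case (Suc k)
    have "Z2 a m n (w @ [c]) = (if c = 0 \<and> w = (replicate n 0 @ 1 # a @ [1]) @ replicate k 0 then (-1) ^ n * (-1) ^ Suc k else 0)"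
      by (simp only: Z2_val' Suc snocq)
    then show ?thesis by (auto simp: Suc ssh_def Pv_val Z2_val)
  qed
  then show ?thesis by (auto simp: dS_def zS_def fun_eq_iff)
qed



lemma shS_if_l: "shS (if b then F else G) H = (if b then shS F H else shS G H)" by simp
lemma shS_if_r: "shS H (if b then F else G) = (if b then shS H F else shS H G)" by simp

theorem mainTheorem18:
  fixes a :: "nat list"
  assumes "set a \<subseteq> {0, 1}"
  defines "N \<equiv> length a"
  shows "(\<lambda>m n w. \<Sum>v\<le>N. (-1) ^ v *
            shS (mulS (geoT (-1)) (cstS (wd (1 # take v a))))
                (mulS (geoS 1) (cstS (wd (1 # rev (drop v a))))) m n w)
       = (\<lambda>m n w.
            shS (geoT (-1))
                (mulS (mulS (geoS 1) (cstS (wd (1 # rev a @ [1])))) (geoT 1)) m n w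
          + (-1) ^ N *
            shS (geoS 1)
                (mulS (mulS (geoT (-1)) (cstS (wd (1 # a @ [1])))) (geoS (-1))) m n w)"
proof -
  let ?A = "geoT (-1)" and ?B = "geoS 1"
  have L: "(\<lambda>m n w. \<Sum>v\<le>N. (-1) ^ v *
            shS (mulS (geoT (-1)) (cstS (wd (1 # take v a))))
                (mulS (geoS 1) (cstS (wd (1 # rev (drop v a))))) m n w)
     = (\<lambda>m n w. \<Sum>v\<le>N. (-1) ^ v * shS (Pv a v) (Qv a v) m n w)"
    by (simp add: Pv_def Qv_def)
  have R: "(\<lambda>m n w.
            shS (geoT (-1))
                (mulS (mulS (geoS 1) (cstS (wd (1 # rev a @ [1])))) (geoT 1)) m n w
          + (-1) ^ N *
            shS (geoS 1)
                (mulS (mulS (geoT (-1)) (cstS (wd (1 # a @ [1])))) (geoS (-1))) m n w)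
     = (\<lambda>m n w. shS ?A (Z1 a) m n w + (-1) ^ N * shS ?B (Z2 a) m n w)"
    by (simp add: Z1_def Z2_def)
  show ?thesis unfolding L R
  proof (intro ext)
    fix m n w
    show "(\<Sum>v\<le>N. (-1) ^ v * shS (Pv a v) (Qv a v) m n w) =
          shS ?A (Z1 a) m n w + (-1) ^ N * shS ?B (Z2 a) m n w"
    proof (cases w rule: rev_cases)
      case Nil
      then show ?thesis by (simp add: shS_Nil Pv_val Qv_val Z1_val Z2_val)
    next
      case (snoc w' c)
      define F where "F v = shS (Pv a v) (Qv a (Suc v)) m n w'" for v
      define g where "g v = (if c = a ! v then F v else 0)" for v
      define X1 where "X1 v = shS (dS c (Pv a v)) (Qv a v) m n w'" for v
      define X2 where "X2 v = shS (Pv a v) (dS c (Qv a v)) m n w'" for v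
      have X1_0: "X1 0 = (if c = 1 then shS ?A (Qv a 0) m n w' else 0)"
        by (simp add: X1_def dP0 shS_zS_l shS_zS_l[unfolded zS_def] shS_zS_r[unfolded zS_def] zS_def)
      have X1_S: "X1 (Suc i) = g i" if "i < N" for i
        using that by (simp add: X1_def g_def F_def dPv N_def shS_zS_l shS_zS_l[unfolded zS_def] shS_zS_r[unfolded zS_def] zS_def)
      have X2_N: "X2 N = (if c = 1 then shS (Pv a N) ?B m n w' else 0)"
        by (simp add: X2_def N_def dQN shS_zS_r shS_zS_r[unfolded zS_def] shS_zS_l[unfolded zS_def] zS_def)
      have X2_i: "X2 i = g i" if "i < N" for i
        using that by (simp add: X2_def g_def F_def dQv N_def shS_zS_r shS_zS_r[unfolded zS_def] shS_zS_l[unfolded zS_def] zS_def)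
      have "(\<Sum>v\<le>N. (-1) ^ v * shS (Pv a v) (Qv a v) m n w) =
            (\<Sum>v\<le>N. (-1) ^ v * X1 v) + (\<Sum>v\<le>N. (-1) ^ v * X2 v)"
        by (simp add: snoc shS_snoc X1_def X2_def distrib_left sum.distrib)
      also have "(\<Sum>v\<le>N. (-1) ^ v * X1 v) = X1 0 + (\<Sum>i<N. (-1) ^ Suc i * X1 (Suc i))"
        by (subst sum.atMost_shift) simp
      also have "(\<Sum>i<N. (-1) ^ Suc i * X1 (Suc i)) = - (\<Sum>i<N. (-1) ^ i * g i)"
        by (simp add: X1_S sum_negf[symmetric])
      also have "(\<Sum>v\<le>N. (-1) ^ v * X2 v) = (\<Sum>i<N. (-1) ^ i * X2 i) + (-1) ^ N * X2 N"
        by (simp add: lessThan_Suc_atMost[symmetric])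
      also have "(\<Sum>i<N. (-1) ^ i * X2 i) = (\<Sum>i<N. (-1) ^ i * g i)"
        by (simp add: X2_i)
      finally have LHS: "(\<Sum>v\<le>N. (-1) ^ v * shS (Pv a v) (Qv a v) m n w) =
          (if c = 1 then shS ?A (Qv a 0) m n w' + (-1) ^ N * shS (Pv a N) ?B m n w' else 0)"
        by (simp add: X1_0 X2_N)
      have RHS: "shS ?A (Z1 a) m n w + (-1) ^ N * shS ?B (Z2 a) m n w =
          (if c = 1 then shS ?A (Qv a 0) m n w' + (-1) ^ N * shS ?B (Pv a N) m n w' else 0)"
        unfolding snoc shS_snoc dA dB dZ1 dZ2 N_def
        by (simp add: shS_if_l shS_if_r shS_zS_l shS_zS_r shS_tsh_l shS_tsh_r shS_ssh_l shS_ssh_r) (auto simp: tsh_def ssh_def zS_def)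
      show ?thesis unfolding LHS RHS by (simp add: shS_comm[of "Pv a N"])
    qed
  qed
qed

end
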